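(* Suppose $n\in\mathbb N$ with $n\equiv1\pmod 4$. Then \[ \sum_{d\mid n}\left(\frac{-1}{d}\right)d^2+6\sum_{d\mid\frac n3}\left(\frac{-1}{d}\right)d^2>0 . \] Moreover, let $A(n)$ denote the $n$-th Fourier coefficient of \[ \mathcal E(z):=\sum_{\substack{n\ge1\\ n\equiv1\ (12)}}\sum_{d\mid n}\left(\tfrac{-1}{d}\right)d^2q^n-\frac12\sum_{\substack{n\ge1\\ n\equiv5\ (12)}}\sum_{d\mid n}\left(\tfrac{-1}{d}\right)d^2q^n-2\sum_{\substack{n\ge1\\ n\equiv 9\ (12)}}\Big(\sum_{d\mid n}\left(\tfrac{-1}{d}\right)d^2+6\sum_{d\mid \frac n3}\left(\tfrac{-1}{d}\right)d^2\Big)q^n . \] Then for every $n\in\mathbb N_0$, \[ \operatorname{sgn}(A(4n+1))=\begin{cases}1&\text{if } 3\mid n,\\ -1&\text{otherwise.}\end{cases} \]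
   Context: Sums are over positive divisors; a sum over $d\mid \frac n3$ is empty (zero) if $3\nmid n$. $\left(\frac{-1}{d}\right)$ is the Kronecker symbol. *)

theory Defs
  imports "HOL-Computational_Algebra.Computational_Algebra"
begin

text \<open>Kronecker symbol (-1/d) for d > 0: completely multiplicative in d with
  (-1/2) = 1 and (-1/p) = (-1)^((p-1)/2) for odd primes p. Hence it equals
  the value on the odd part of d, which is 1 if the odd part is 1 mod 4, and -1 otherwise.
  For d = 0 the Kronecker symbol (-1/0) is 1 (since |-1| = 1).\<close>
definition kron_m1 :: "nat \<Rightarrow> int" where
  "kron_m1 d = (if d = 0 then 1 else
     (let m = d div 2 ^ multiplicity 2 d in if m mod 4 = 1 then 1 else -1))"

definition sig :: "nat \<Rightarrow> int" where
  "sig n = (\<Sum>d | d dvd n \<and> d > 0. kron_m1 d * int d ^ 2)"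

definition sig3 :: "nat \<Rightarrow> int" where
  "sig3 n = (if 3 dvd n then sig (n div 3) else 0)"

definition coeffA :: "nat \<Rightarrow> real" where
  "coeffA n = (if n \<ge> 1 \<and> n mod 12 = 1 then of_int (sig n)
     else if n \<ge> 1 \<and> n mod 12 = 5 then - (1/2) * of_int (sig n)
     else if n \<ge> 1 \<and> n mod 12 = 9 then - 2 * of_int (sig n + 6 * sig3 n)
     else 0)"

end

theory Submission
  imports Defs
begin

lemma div_div_self: "0 < k \<Longrightarrow> e dvd (k::nat) \<Longrightarrow> k div (k div e) = e"
  by (auto elim!: dvdE)

lemma tele: "k \<ge> 2 \<Longrightarrow> (\<Sum>e=3..k. (1/(real e - 1) - 1/real e)) = 1/2 - 1/real k"
proof (induction k rule: dec_induct)
  case base then show ?case by simp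
next
  case (step k)
  have "{3..Suc k} = insert (Suc k) {3..k}" using step by auto
  hence "(\<Sum>e=3..Suc k. (1/(real e - 1) - 1/real e)) = (1/(real (Suc k) - 1) - 1/real (Suc k)) + (\<Sum>e=3..k. (1/(real e - 1) - 1/real e))"
    by simp
  also have "\<dots> = 1/real k - 1/real (Suc k) + (1/2 - 1/real k)" using step by simp
  finally show ?case by simp
qed

definition P :: "nat \<Rightarrow> nat set" where "P k = {d. d dvd k \<and> 0 < d \<and> d < k}"

lemma P_fin: "finite (P k)" unfolding P_def by (rule finite_subset[of _ "{..k}"]) auto

lemma bound_real:
  assumes "odd k"
  shows "2 * (\<Sum>d\<in>P k. real d ^ 2) < real k ^ 2"
proof -
  have k0: "k > 0" using assms by (cases k) auto
  define E where "E = {e. e dvd k \<and> 1 < e}"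
  have "(\<Sum>d\<in>P k. real d ^ 2) = (\<Sum>e\<in>E. real (k div e) ^ 2)"
  proof (rule sum.reindex_bij_witness[where i = "\<lambda>e. k div e" and j = "\<lambda>d. k div d"])
    fix e assume "e \<in> E" thus "k div (k div e) = e" unfolding E_def
      using k0 by (simp add: div_div_self)
  next
    fix e assume "e \<in> E" thus "k div e \<in> P k" unfolding E_def P_def
      using k0 by (auto simp: div_greater_zero_iff dvd_imp_le intro: div_less_dividend)
  next
    fix d assume "d \<in> P k" thus "k div (k div d) = d" unfolding P_def
      using k0 by (simp add: div_div_self)
  next
    fix d assume d: "d \<in> P k" 
    hence "k div d > 1" unfolding P_def
      by (metis (mono_tags, lifting) dvd_mult_div_cancel mem_Collect_eq mult.right_neutral nat_neq_iff not_less_zero less_one mult_0_right)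
    thus "k div d \<in> E" using d unfolding E_def P_def by auto
  qed (use k0 in \<open>auto simp: P_def div_div_self\<close>)
  also have "\<dots> \<le> (\<Sum>e\<in>{3..k}. real k ^ 2 * (1/(real e - 1) - 1/real e))"
  proof (rule sum_le_included[where i = id])
    show "finite {3..k}" by simp
    show "finite E" unfolding E_def by (rule finite_subset[of _ "{..k}"]) (use k0 in \<open>auto simp: dvd_imp_le\<close>)
    show "\<forall>y\<in>{3..k}. 0 \<le> real k ^ 2 * (1/(real y - 1) - 1/real y)" by (auto simp: field_simps)
    show "\<forall>x\<in>E. \<exists>y\<in>{3..k}. id y = x \<and> real (k div x) ^ 2 \<le> real k ^ 2 * (1/(real y - 1) - 1/real y)"
    proof
      fix e assume e: "e \<in> E"
      hence ed: "e dvd k" "1 < e" unfolding E_def by auto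
      have "e \<noteq> 2" using ed assms by auto
      hence e3: "e \<ge> 3" using ed by auto
      have "e \<le> k" using ed k0 by (simp add: dvd_imp_le)
      moreover have "real (k div e) ^ 2 \<le> real k ^ 2 * (1/(real e - 1) - 1/real e)"
      proof -
        have "real (k div e) = real k / real e" using ed by (simp add: real_of_nat_div)
        moreover have "1/(real e - 1) - 1/real e = 1 / (real e * (real e - 1))" using e3 by (simp add: field_simps)
        moreover have "real k ^2 / real e ^ 2 \<le> real k ^ 2 / (real e * (real e - 1))"
          using e3 by (intro divide_left_mono) (auto simp: power2_eq_square)
        ultimately show ?thesis by (simp add: power_divide)
      qed
      ultimately show "\<exists>y\<in>{3..k}. id y = e \<and> real (k div e) ^ 2 \<le> real k ^ 2 * (1/(real y - 1) - 1/real y)"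
        using e3 by auto
    qed
  qed
  also have "\<dots> = real k ^ 2 * (\<Sum>e\<in>{3..k}. (1/(real e - 1) - 1/real e))"
    by (simp add: sum_distrib_left)
  also have "\<dots> < real k ^ 2 / 2"
  proof (cases "k \<ge> 2")
    case True
    have "real k ^ 2 * (1/2 - 1/real k) = real k ^ 2 / 2 - real k" using k0 by (simp add: field_simps power2_eq_square)
    also have "\<dots> < real k ^ 2 / 2" using k0 by simp
    finally show ?thesis using tele[OF True] by simp
  next
    case False thus ?thesis using k0 by simp
  qed
  finally show ?thesis by simp
qed

lemma bound_int:
  assumes "odd k"
  shows "2 * (\<Sum>d\<in>P k. int d ^ 2) < int k ^ 2"
proof -
  have "real_of_int (2 * (\<Sum>d\<in>P k. int d ^ 2)) < real_of_int (int k ^ 2)"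
    using bound_real[OF assms] by simp
  thus ?thesis by linarith
qed

lemma kron_odd: "odd d \<Longrightarrow> kron_m1 d = (if d mod 4 = 1 then 1 else -1)"
  unfolding kron_m1_def
  by (cases d) (auto simp: not_dvd_imp_multiplicity_0 Let_def)

lemma kron_abs: "\<bar>kron_m1 d\<bar> = 1"
  unfolding kron_m1_def by (auto simp: Let_def)

lemma kron_3: "odd e \<Longrightarrow> kron_m1 (3 * e) = - kron_m1 e"
  by (simp add: kron_odd, presburger)

lemma sig_split:
  assumes "k > 0"
  shows "sig k = kron_m1 k * int k ^ 2 + (\<Sum>d\<in>P k. kron_m1 d * int d ^ 2)"
proof -
  have "{d. d dvd k \<and> d > 0} = insert k (P k)" using assms unfolding P_def
    by (auto simp: dvd_imp_le le_neq_implies_less)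
  moreover have "k \<notin> P k" unfolding P_def by auto
  ultimately show ?thesis unfolding sig_def using P_fin by simp
qed

lemma err_bound: "\<bar>\<Sum>d\<in>A. kron_m1 d * int d ^ 2\<bar> \<le> (\<Sum>d\<in>A. int d ^ 2)"
proof -
  have "\<bar>\<Sum>d\<in>A. kron_m1 d * int d ^ 2\<bar> \<le> (\<Sum>d\<in>A. \<bar>kron_m1 d * int d ^ 2\<bar>)" by (rule sum_abs)
  also have "\<dots> = (\<Sum>d\<in>A. int d ^ 2)" by (simp add: abs_mult kron_abs)
  finally show ?thesis .
qed

lemma sig_pos: assumes "k mod 4 = 1" shows "sig k > 0"
proof -
  have o: "odd k" using assms by presburger
  have k0: "k > 0" using assms by (cases k) auto
  have "kron_m1 k = 1" using assms o by (simp add: kron_odd)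
  hence "sig k = int k ^ 2 + (\<Sum>d\<in>P k. kron_m1 d * int d ^ 2)" using sig_split[OF k0] by simp
  moreover have "- (\<Sum>d\<in>P k. int d ^ 2) \<le> (\<Sum>d\<in>P k. kron_m1 d * int d ^ 2)" "(\<Sum>d\<in>P k. kron_m1 d * int d ^ 2) \<le> (\<Sum>d\<in>P k. int d ^ 2)"
    using err_bound[of "P k"] by (simp_all only: abs_le_iff) linarith+
  ultimately show ?thesis using bound_int[OF o] by linarith
qed

lemma sig_neg: assumes "k mod 4 = 3" shows "sig k < 0"
proof -
  have o: "odd k" using assms by presburger
  have k0: "k > 0" using assms by (cases k) auto
  have "kron_m1 k = -1" using assms o by (simp add: kron_odd)
  hence "sig k = - (int k ^ 2) + (\<Sum>d\<in>P k. kron_m1 d * int d ^ 2)" using sig_split[OF k0] by simp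
  moreover have "- (\<Sum>d\<in>P k. int d ^ 2) \<le> (\<Sum>d\<in>P k. kron_m1 d * int d ^ 2)" "(\<Sum>d\<in>P k. kron_m1 d * int d ^ 2) \<le> (\<Sum>d\<in>P k. int d ^ 2)"
    using err_bound[of "P k"] by (simp_all only: abs_le_iff) linarith+
  ultimately show ?thesis using bound_int[OF o] by linarith
qed

lemma sig_3k:
  assumes "odd k"
  shows "sig (3 * k) = - 9 * sig k + (\<Sum>d\<in>{d. d dvd k \<and> d > 0 \<and> \<not> 3 dvd d}. kron_m1 d * int d ^ 2)"
proof -
  have k0: "k > 0" using assms by (cases k) auto
  define D where "D = {d. d dvd k \<and> d > 0}"
  define B where "B = {d. d dvd k \<and> d > 0 \<and> \<not> 3 dvd d}"
  define A where "A = (\<lambda>e. 3 * e) ` D"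
  have fD: "finite D" unfolding D_def by (rule finite_subset[of _ "{..k}"]) (use k0 in \<open>auto simp: dvd_imp_le\<close>)
  have fB: "finite B" by (rule finite_subset[OF _ fD]) (auto simp: B_def D_def)
  have fA: "finite A" unfolding A_def using fD by simp
  have eq: "{d. d dvd 3 * k \<and> d > 0} = A \<union> B"
  proof (intro set_eqI iffI)
    fix d assume d: "d \<in> {d. d dvd 3 * k \<and> d > 0}"
    show "d \<in> A \<union> B"
    proof (cases "3 dvd d")
      case True then obtain e where e: "d = 3 * e" by auto
      hence "e dvd k" "e > 0" using d by auto
      thus ?thesis using e unfolding A_def D_def by auto
    next
      case False
      hence "coprime 3 d" using prime_imp_coprime[of "3::nat" d] by simp
      hence "coprime d 3" by (simp add: coprime_commute)
      hence "d dvd k" using d by (metis coprime_dvd_mult_right_iff mem_Collect_eq)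
      thus ?thesis using d False unfolding B_def by auto
    qed
  next
    fix d assume "d \<in> A \<union> B"
    thus "d \<in> {d. d dvd 3 * k \<and> d > 0}" unfolding A_def B_def D_def by auto
  qed
  have disj: "A \<inter> B = {}" unfolding A_def B_def by auto
  have "sig (3*k) = (\<Sum>d\<in>A. kron_m1 d * int d ^ 2) + (\<Sum>d\<in>B. kron_m1 d * int d ^ 2)"
    unfolding sig_def eq by (rule sum.union_disjoint[OF fA fB disj])
  moreover have "(\<Sum>d\<in>A. kron_m1 d * int d ^ 2) = (\<Sum>e\<in>D. kron_m1 (3*e) * int (3*e) ^ 2)"
    unfolding A_def by (rule sum.reindex_cong[where l = "\<lambda>e. 3 * e"]) (auto simp: inj_on_def)
  moreover have "\<dots> = (\<Sum>e\<in>D. (-9) * (kron_m1 e * int e ^ 2))"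
  proof (rule sum.cong[OF refl])
    fix e assume "e \<in> D"
    hence "e dvd k" unfolding D_def by simp
    hence "odd e" using assms dvd_trans[of 2 e k] by blast
    thus "kron_m1 (3*e) * int (3*e) ^ 2 = (-9) * (kron_m1 e * int e ^ 2)"
      by (simp add: kron_3 power_mult_distrib)
  qed
  moreover have "\<dots> = -9 * sig k" unfolding sig_def D_def by (simp add: sum_distrib_left)
  ultimately show ?thesis unfolding B_def by simp
qed

lemma part1: assumes "m mod 4 = 1" shows "sig m + 6 * sig3 m > 0"
proof (cases "3 dvd m")
  case False thus ?thesis using sig_pos[OF assms] unfolding sig3_def by simp
next
  case True
  then obtain k where m: "m = 3 * k" by auto
  have k3: "k mod 4 = 3" using assms m by presburger
  have o: "odd k" using k3 by presburger
  have k0: "k > 0" using o by (cases k) auto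
  have s3: "sig3 m = sig k" unfolding m sig3_def by simp
  let ?B = "{d. d dvd k \<and> d > 0 \<and> \<not> 3 dvd d}"
  let ?T = "(\<Sum>d\<in>?B. kron_m1 d * int d ^ 2)"
  have kk: "kron_m1 k = -1" using k3 o by (simp add: kron_odd)
  have sk: "sig k = - (int k ^ 2) + (\<Sum>d\<in>P k. kron_m1 d * int d ^ 2)" using sig_split[OF k0] kk by simp
  have eb: "\<bar>\<Sum>d\<in>P k. kron_m1 d * int d ^ 2\<bar> \<le> (\<Sum>d\<in>P k. int d ^ 2)" by (rule err_bound)
  have bi: "2 * (\<Sum>d\<in>P k. int d ^ 2) < int k ^ 2" by (rule bound_int[OF o])
  have tot: "sig m + 6 * sig3 m = -3 * sig k + ?T" proof -
    have "sig m = sig (3*k)" using m by simp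
    thus ?thesis using s3 sig_3k[OF o] by linarith
  qed
  show ?thesis
  proof (cases "3 dvd k")
    case True
    have sub: "?B \<subseteq> P k"
    proof
      fix d assume d: "d \<in> ?B"
      hence "d dvd k" "d > 0" "\<not> 3 dvd d" by auto
      moreover have "d \<le> k" using \<open>d dvd k\<close> k0 by (rule dvd_imp_le)
      moreover have "d \<noteq> k" using True \<open>\<not> 3 dvd d\<close> by auto
      ultimately show "d \<in> P k" unfolding P_def by simp
    qed
    have "\<bar>?T\<bar> \<le> (\<Sum>d\<in>?B. int d ^ 2)" by (rule err_bound)
    also have "\<dots> \<le> (\<Sum>d\<in>P k. int d ^ 2)" by (rule sum_mono2[OF P_fin sub]) auto
    finally have "\<bar>?T\<bar> \<le> (\<Sum>d\<in>P k. int d ^ 2)" .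
    thus ?thesis using tot sk eb bi by linarith
  next
    case False
    have "?B = {d. d dvd k \<and> d > 0}" using False by (auto dest: dvd_trans)
    hence "?T = sig k" unfolding sig_def by simp
    thus ?thesis using tot sig_neg[OF k3] by linarith
  qed
qed

theorem lemma5p2:
  shows "(\<forall>n::nat. n mod 4 = 1 \<longrightarrow> sig n + 6 * sig3 n > 0) \<and>
         (\<forall>n::nat. sgn (coeffA (4 * n + 1)) = (if 3 dvd n then 1 else -1))"
proof (intro conjI allI impI)
  fix n :: nat assume "n mod 4 = 1" thus "sig n + 6 * sig3 n > 0" by (rule part1)
next
  fix n :: nat
  have m4: "(4*n+1) mod 4 = 1" by simp
  have sp: "sig (4*n+1) > 0" by (rule sig_pos[OF m4])
  have p1: "sig (4*n+1) + 6 * sig3 (4*n+1) > 0" by (rule part1[OF m4])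
  consider "n mod 3 = 0" | "n mod 3 = 1" | "n mod 3 = 2" by linarith
  thus "sgn (coeffA (4 * n + 1)) = (if 3 dvd n then 1 else -1)"
  proof cases
    case 1
    have "(4*n+1) mod 12 = 1" using 1 by presburger
    moreover have "3 dvd n" using 1 by presburger
    ultimately show ?thesis using sp unfolding coeffA_def by simp
  next
    case 2
    have "(4*n+1) mod 12 = 5" using 2 by presburger
    moreover have "\<not> 3 dvd n" using 2 by presburger
    ultimately show ?thesis using sp unfolding coeffA_def by simp
  next
    case 3
    have "(4*n+1) mod 12 = 9" using 3 by presburger
    moreover have "\<not> 3 dvd n" using 3 by presburger
    moreover have "real_of_int (sig (4*n+1) + 6 * sig3 (4*n+1)) > 0" using p1 by simp
    ultimately show ?thesis unfolding coeffA_def by (simp del: of_int_add of_int_mult)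
  qed
qed

end
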